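(* Let $(H,\eta)$ be a rigid extended strip decomposition of an $n$-vertex graph $G$. Then $|E(H)|\leq n$ and $|V(H)|\leq 2n$.
   Context: All graphs are finite and simple. $T(H)$ denotes the set of triangles of $H$, a triangle on $x,y,z$ written $xyz$. Two vertex sets are complete to each other if every vertex of one is adjacent to every vertex of the other. An extended strip decomposition of a graph $G$ is a pair $(H,\eta)$ where $H$ is a simple graph and $\eta$ assigns: a set $\eta(x)\subseteq V(G)$ to each $x\in V(H)$; a set $\eta(xy)\subseteq V(G)$ to each $xy\in E(H)$, together with subsets $\eta(xy,x),\eta(xy,y)\subseteq \eta(xy)$; and a set $\eta(xyz)\subseteq V(G)$ to each $xyz\in T(H)$; such that (1) the sets $\eta(o)$, $o\in V(H)\cup E(H)\cup T(H)$, are pairwise disjoint (possibly empty) and their union is $V(G)$; (2) for every $x\in V(H)$ and distinct $y,z\in N_H(x)$, $\eta(xy,x)$ is complete to $\eta(xz,x)$; (3) every edge $uv\in E(G)$ either has both ends in one set $\eta(o)$, or $u\in\eta(xy,x)$, $v\in\eta(xz,x)$ for some $x\in V(H)$ and $y,z\in N_H(x)$, or $u\in\eta(xy,x)$, $v\in\eta(x)$ for some $xy\in E(H)$, or $u\in\eta(xyz)$, $v\in\eta(xy,x)\cap\eta(xy,y)$ for some $xyz\in T(H)$. It is rigid if $\eta(xy,x)\neq\emptyset$ for every edge $xy\in E(H)$ (for both ends $x$ of the edge), and $\eta(x)\neq\emptyset$ for every isolated vertex $x$ of $H$. *)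

theory Defs
  imports Main
begin

definition simple_graph :: "'a set \<Rightarrow> ('a \<Rightarrow> 'a \<Rightarrow> bool) \<Rightarrow> bool" where
  "simple_graph V E \<longleftrightarrow> finite V \<and> (\<forall>x y. E x y \<longrightarrow> x \<in> V \<and> y \<in> V)
     \<and> (\<forall>x y. E x y \<longrightarrow> E y x) \<and> (\<forall>x. \<not> E x x)"

definition edges :: "('a \<Rightarrow> 'a \<Rightarrow> bool) \<Rightarrow> 'a set set" where
  "edges E = {{x, y} | x y. E x y}"

definition triangles :: "('a \<Rightarrow> 'a \<Rightarrow> bool) \<Rightarrow> 'a set set" where
  "triangles E = {{x, y, z} | x y z. E x y \<and> E y z \<and> E x z}"

definition objects :: "'a set \<Rightarrow> ('a \<Rightarrow> 'a \<Rightarrow> bool) \<Rightarrow> 'a set set" where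
  "objects V E = (\<lambda>x. {x}) ` V \<union> edges E \<union> triangles E"

definition complete_to :: "('a \<Rightarrow> 'a \<Rightarrow> bool) \<Rightarrow> 'a set \<Rightarrow> 'a set \<Rightarrow> bool" where
  "complete_to E A B \<longleftrightarrow> (\<forall>u\<in>A. \<forall>v\<in>B. E u v)"

text \<open>Edge u v of G is allowed by (H, eta), in the orientation u, v (condition (3)).
  eta o gives the set of an object (vertex {x}, edge {x,y}, triangle {x,y,z});
  etaEnd {x,y} x is eta(xy,x).\<close>
definition allowed_edge ::
  "'b set \<Rightarrow> ('b \<Rightarrow> 'b \<Rightarrow> bool) \<Rightarrow> ('b set \<Rightarrow> 'a set) \<Rightarrow> ('b set \<Rightarrow> 'b \<Rightarrow> 'a set)
   \<Rightarrow> 'a \<Rightarrow> 'a \<Rightarrow> bool" where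
  "allowed_edge VH EH eta etaEnd u v \<longleftrightarrow>
     (\<exists>ob\<in>objects VH EH. u \<in> eta ob \<and> v \<in> eta ob)
   \<or> (\<exists>x y z. x \<in> VH \<and> EH x y \<and> EH x z \<and> u \<in> etaEnd {x, y} x \<and> v \<in> etaEnd {x, z} x)
   \<or> (\<exists>x y. EH x y \<and> u \<in> etaEnd {x, y} x \<and> v \<in> eta {x})
   \<or> (\<exists>x y z. EH x y \<and> EH y z \<and> EH x z \<and> u \<in> eta {x, y, z}
        \<and> v \<in> etaEnd {x, y} x \<inter> etaEnd {x, y} y)"

definition extended_strip_decomposition ::
  "'a set \<Rightarrow> ('a \<Rightarrow> 'a \<Rightarrow> bool) \<Rightarrow> 'b set \<Rightarrow> ('b \<Rightarrow> 'b \<Rightarrow> bool)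
   \<Rightarrow> ('b set \<Rightarrow> 'a set) \<Rightarrow> ('b set \<Rightarrow> 'b \<Rightarrow> 'a set) \<Rightarrow> bool" where
  "extended_strip_decomposition VG EG VH EH eta etaEnd \<longleftrightarrow>
     simple_graph VH EH
   \<and> (\<forall>e\<in>edges EH. \<forall>x\<in>e. etaEnd e x \<subseteq> eta e)
   \<and> (\<forall>o1\<in>objects VH EH. \<forall>o2\<in>objects VH EH. o1 \<noteq> o2 \<longrightarrow> eta o1 \<inter> eta o2 = {})
   \<and> (\<Union>ob\<in>objects VH EH. eta ob) = VG
   \<and> (\<forall>x\<in>VH. \<forall>y z. EH x y \<and> EH x z \<and> y \<noteq> z \<longrightarrow>
        complete_to EG (etaEnd {x, y} x) (etaEnd {x, z} x))
   \<and> (\<forall>u v. EG u v \<longrightarrow> allowed_edge VH EH eta etaEnd u v \<or> allowed_edge VH EH eta etaEnd v u)"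

definition rigid ::
  "'b set \<Rightarrow> ('b \<Rightarrow> 'b \<Rightarrow> bool) \<Rightarrow> ('b set \<Rightarrow> 'a set) \<Rightarrow> ('b set \<Rightarrow> 'b \<Rightarrow> 'a set) \<Rightarrow> bool" where
  "rigid VH EH eta etaEnd \<longleftrightarrow>
     (\<forall>x y. EH x y \<longrightarrow> etaEnd {x, y} x \<noteq> {})
   \<and> (\<forall>x\<in>VH. (\<forall>y. \<not> EH x y) \<longrightarrow> eta {x} \<noteq> {})"

end

theory Submission
  imports Defs
begin

lemma disj_family_card_le:
  assumes "finite V" "\<forall>ob\<in>F. eta ob \<noteq> {} \<and> eta ob \<subseteq> V"
    "\<forall>o1\<in>F. \<forall>o2\<in>F. o1 \<noteq> o2 \<longrightarrow> eta o1 \<inter> eta o2 = {}"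
  shows "card F \<le> card V"
proof -
  define f where "f ob = (SOME v. v \<in> eta ob)" for ob
  have fin: "f ob \<in> eta ob" if "ob \<in> F" for ob
  proof -
    have "\<exists>v. v \<in> eta ob" using assms(2) that by blast
    then show ?thesis unfolding f_def by (rule someI_ex)
  qed
  have "inj_on f F"
  proof (rule inj_onI)
    fix a b assume ab: "a \<in> F" "b \<in> F" "f a = f b"
    show "a = b"
    proof (rule ccontr)
      assume "a \<noteq> b"
      then have "eta a \<inter> eta b = {}" using assms(3) ab by blast
      moreover have "f a \<in> eta a \<inter> eta b" using fin[OF ab(1)] fin[OF ab(2)] ab(3) by simp
      ultimately show False by simp
    qed
  qed
  moreover have "f ` F \<subseteq> V" using fin assms(2) by blast
  ultimately show ?thesis using card_inj_on_le assms(1) by blast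
qed

lemma edges_card2:
  assumes "e \<in> edges EH" "simple_graph VH EH" shows "card e = 2"
proof -
  obtain x y where xy: "e = {x,y}" "EH x y" using assms(1) unfolding edges_def by blast
  then have "x \<noteq> y" using assms(2) unfolding simple_graph_def by blast
  then show ?thesis using xy by simp
qed

lemma edges_sub: "simple_graph VH EH \<Longrightarrow> edges EH \<subseteq> Pow VH"
  unfolding edges_def simple_graph_def by blast

theorem mainTheorem4:
  fixes VG :: "'a set" and EG :: "'a \<Rightarrow> 'a \<Rightarrow> bool"
    and VH :: "'b set" and EH :: "'b \<Rightarrow> 'b \<Rightarrow> bool"
    and eta :: "'b set \<Rightarrow> 'a set" and etaEnd :: "'b set \<Rightarrow> 'b \<Rightarrow> 'a set"
    and n :: nat
  assumes "simple_graph VG EG"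
    and "card VG = n"
    and "extended_strip_decomposition VG EG VH EH eta etaEnd"
    and "rigid VH EH eta etaEnd"
  shows "card (edges EH) \<le> n \<and> card VH \<le> 2 * n"
proof -
  have finG: "finite VG" using assms(1) unfolding simple_graph_def by blast
  note ES = assms(3)[unfolded extended_strip_decomposition_def]
  have sH: "simple_graph VH EH" using ES by (rule conjunct1)
  have finH: "finite VH" using sH unfolding simple_graph_def by blast
  have finE: "finite (edges EH)" using edges_sub[OF sH] finH
    by (meson finite_Pow_iff finite_subset)
  define Iso where "Iso = {x\<in>VH. \<forall>y. \<not> EH x y}"
  define F where "F = (\<lambda>x. {x}) ` Iso \<union> edges EH"
  have Fobj: "F \<subseteq> objects VH EH" unfolding F_def objects_def Iso_def by blast
  have "(\<Union>ob\<in>objects VH EH. eta ob) = VG"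
    using ES by (elim conjE)
  then have sub: "\<forall>ob\<in>objects VH EH. eta ob \<subseteq> VG" by blast
  have disj: "\<forall>o1\<in>objects VH EH. \<forall>o2\<in>objects VH EH. o1 \<noteq> o2 \<longrightarrow> eta o1 \<inter> eta o2 = {}"
    using ES by (elim conjE)
  have endsub: "\<forall>e\<in>edges EH. \<forall>x\<in>e. etaEnd e x \<subseteq> eta e"
    using ES by (elim conjE)
  have ne: "\<forall>ob\<in>F. eta ob \<noteq> {}"
  proof
    fix ob assume "ob \<in> F"
    then consider (a) x where "x \<in> Iso" "ob = {x}" | (b) "ob \<in> edges EH" unfolding F_def by blast
    then show "eta ob \<noteq> {}"
    proof cases
      case a then show ?thesis using assms(4) unfolding rigid_def Iso_def by blast
    next
      case b
      then obtain x y where xy: "ob = {x,y}" "EH x y" unfolding edges_def by blast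
      then have "etaEnd {x,y} x \<noteq> {}" using assms(4) unfolding rigid_def by blast
      moreover have "etaEnd {x,y} x \<subseteq> eta {x,y}" using endsub b unfolding xy by blast
      ultimately show ?thesis using xy by blast
    qed
  qed
  have cF: "card F \<le> n"
  proof -
    have p1: "\<forall>ob\<in>F. eta ob \<noteq> {} \<and> eta ob \<subseteq> VG" using ne sub Fobj by blast
    have p2: "\<forall>o1\<in>F. \<forall>o2\<in>F. o1 \<noteq> o2 \<longrightarrow> eta o1 \<inter> eta o2 = {}"
      using disj Fobj by (meson subsetD)
    have "card F \<le> card VG" by (rule disj_family_card_le[OF finG p1 p2])
    then show ?thesis using assms(2) by simp
  qed
  have finI: "finite Iso" using finH unfolding Iso_def by simp
  have "(\<lambda>x. {x}) ` Iso \<inter> edges EH = {}"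
  proof -
    have "{x} \<notin> edges EH" for x using edges_card2[OF _ sH, of "{x}"] by auto
    then show ?thesis by blast
  qed
  then have cF2: "card F = card Iso + card (edges EH)"
    unfolding F_def using finI finE by (simp add: card_Un_disjoint card_image)
  have NI: "VH - Iso \<subseteq> \<Union>(edges EH)"
    unfolding Iso_def edges_def by blast
  have finU: "finite (\<Union>(edges EH))"
  proof -
    have "\<Union>(edges EH) \<subseteq> VH" using edges_sub[OF sH] by blast
    then show ?thesis using finH by (rule finite_subset)
  qed
  have "card (VH - Iso) \<le> card (\<Union>(edges EH))"
    using card_mono[OF finU NI] .
  also have "card (\<Union>(edges EH)) \<le> sum card (edges EH)"
    using card_Union_le_sum_card finE edges_sub[OF sH] finH
    by (metis (no_types, lifting) PowD finite_subset subsetD)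
  also have "sum card (edges EH) = 2 * card (edges EH)"
    using edges_card2[OF _ sH] by simp
  finally have "card (VH - Iso) \<le> 2 * card (edges EH)" .
  moreover have "card VH = card Iso + card (VH - Iso)"
  proof -
    have IV: "Iso \<subseteq> VH" unfolding Iso_def by blast
    show ?thesis using card_Diff_subset[OF finI IV] card_mono[OF finH IV] by linarith
  qed
  ultimately show ?thesis using cF cF2 by linarith
qed

end
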